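(* Let $\mathcal{X}$ be a finite set with $|\mathcal{X}|=n$, $\pi$ a probability mass function on $\mathcal{X}$ with full support, and $P$ a $\pi$-reversible transition matrix. Let a group $\mathcal{G}$ act on $\mathcal{X}$ with $k<n$ orbits $(\mathcal{O}_i)_{i=1}^k$, and let $G$ be the Gibbs orbit kernel. Then $\mathrm{spec}(GPG)=\mathrm{spec}(\overline{P})\cup\{0\}$.
   Context: $G(x,y)=\pi(y)/\pi(\mathcal{O}(x))$ for $y$ in the orbit $\mathcal{O}(x)$ of $x$, else $0$, with $\pi(A)=\sum_{z\in A}\pi(z)$. The projection chain is $\overline{P}(i,j)=\frac{1}{\pi(\mathcal{O}_i)}\sum_{x\in\mathcal{O}_i,y\in\mathcal{O}_j}\pi(x)P(x,y)$ on $\{1,\dots,k\}$. $\mathrm{spec}(K)$ denotes the set of distinct eigenvalues of $K$. *)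

theory Defs
  imports "HOL-Analysis.Analysis" "HOL-Algebra.Group_Action"
begin

text \<open>Matrices on a finite carrier S are functions of two arguments; only entries
  indexed by S matter.  Spectrum = set of distinct (complex) eigenvalues.\<close>

definition spec_on :: "'a set \<Rightarrow> ('a \<Rightarrow> 'a \<Rightarrow> real) \<Rightarrow> complex set" where
  "spec_on S K = {c. \<exists>v :: 'a \<Rightarrow> complex. (\<exists>x\<in>S. v x \<noteq> 0) \<and>
       (\<forall>x\<in>S. (\<Sum>y\<in>S. complex_of_real (K x y) * v y) = c * v x)}"

definition mat_mult :: "('a::finite \<Rightarrow> 'a \<Rightarrow> real) \<Rightarrow> ('a \<Rightarrow> 'a \<Rightarrow> real) \<Rightarrow> ('a \<Rightarrow> 'a \<Rightarrow> real)" where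
  "mat_mult A B = (\<lambda>x z. \<Sum>y\<in>UNIV. A x y * B y z)"

definition pmass :: "('a \<Rightarrow> real) \<Rightarrow> 'a set \<Rightarrow> real" where
  "pmass \<pi> A = (\<Sum>z\<in>A. \<pi> z)"

definition gibbs_orbit_kernel ::
  "('g, 'm) monoid_scheme \<Rightarrow> ('g \<Rightarrow> 'a \<Rightarrow> 'a) \<Rightarrow> ('a \<Rightarrow> real) \<Rightarrow> 'a \<Rightarrow> 'a \<Rightarrow> real" where
  "gibbs_orbit_kernel G \<phi> \<pi> x y =
     (if y \<in> orbit G \<phi> x then \<pi> y / pmass \<pi> (orbit G \<phi> x) else 0)"

definition projection_chain ::
  "('a \<Rightarrow> real) \<Rightarrow> ('a \<Rightarrow> 'a \<Rightarrow> real) \<Rightarrow> 'a set \<Rightarrow> 'a set \<Rightarrow> real" where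
  "projection_chain \<pi> P Oi Oj = (\<Sum>x\<in>Oi. \<Sum>y\<in>Oj. \<pi> x * P x y) / pmass \<pi> Oi"

end

theory Submission
  imports Defs
begin

lemma orb_eq:
  assumes act: "group_action G (UNIV :: 'x set) \<phi>" and y: "y \<in> orbit G \<phi> x"
  shows "orbit G \<phi> y = orbit G \<phi> x"
proof -
  interpret group_action G "UNIV :: 'x set" \<phi> by (rule act)
  show ?thesis
    using y orbit_sym orbit_trans by blast
qed

lemma orb_refl:
  assumes act: "group_action G (UNIV :: 'x set) \<phi>"
  shows "x \<in> orbit G \<phi> x"
proof -
  interpret group_action G "UNIV :: 'x set" \<phi> by (rule act)
  show ?thesis using orbit_refl by blast
qed

lemma orbits_eq: "orbits G UNIV \<phi> = range (orbit G \<phi>)"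
  unfolding orbits_def by auto

lemma orb_sum:
  fixes f :: "'x::finite \<Rightarrow> complex"
  assumes act: "group_action G (UNIV :: 'x set) \<phi>"
  shows "(\<Sum>Q\<in>orbits G UNIV \<phi>. \<Sum>x\<in>Q. f x) = (\<Sum>x\<in>UNIV. f x)"
proof -
  interpret group_action G "UNIV :: 'x set" \<phi> by (rule act)
  show ?thesis using disjoint_sum by simp
qed

lemma mat_mult_apply:
  fixes A B :: "'x::finite \<Rightarrow> 'x \<Rightarrow> real"
  shows "(\<Sum>z\<in>UNIV. complex_of_real (mat_mult A B x z) * v z)
       = (\<Sum>y\<in>UNIV. complex_of_real (A x y) * (\<Sum>z\<in>UNIV. complex_of_real (B y z) * v z))"
  unfolding mat_mult_def of_real_sum sum_distrib_left sum_distrib_right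
  by (subst sum.swap) (simp add: mult.assoc)

lemma pmass_pos:
  assumes "\<And>x. \<pi> x > 0" "finite A" "A \<noteq> {}"
  shows "pmass \<pi> A > 0"
  unfolding pmass_def using assms by (simp add: sum_pos)



lemma G_apply:
  fixes \<pi> :: "'x::finite \<Rightarrow> real"
  shows "(\<Sum>y\<in>UNIV. complex_of_real (gibbs_orbit_kernel G \<phi> \<pi> x y) * v y)
     = (\<Sum>y\<in>orbit G \<phi> x. complex_of_real (\<pi> y / pmass \<pi> (orbit G \<phi> x)) * v y)"
  by (rule sum.mono_neutral_cong_right) (auto simp: gibbs_orbit_kernel_def)

lemma G_fix:
  fixes \<pi> :: "'x::finite \<Rightarrow> real"
  assumes act: "group_action G (UNIV :: 'x set) \<phi>" and pos: "\<And>x. \<pi> x > 0"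
    and const: "\<And>x y. y \<in> orbit G \<phi> x \<Longrightarrow> v y = v x"
  shows "(\<Sum>y\<in>UNIV. complex_of_real (gibbs_orbit_kernel G \<phi> \<pi> x y) * v y) = v x"
proof -
  let ?Q = "orbit G \<phi> x"
  have pm: "pmass \<pi> ?Q > 0"
    by (rule pmass_pos[OF pos]) (use orb_refl[OF act] in auto)
  have e1: "(\<Sum>y\<in>?Q. complex_of_real (\<pi> y / pmass \<pi> ?Q)) = complex_of_real ((\<Sum>y\<in>?Q. \<pi> y) / pmass \<pi> ?Q)"
    by (simp only: sum_divide_distrib of_real_sum)
  have e2: "(\<Sum>y\<in>?Q. \<pi> y) / pmass \<pi> ?Q = 1" using pm unfolding pmass_def by simp
  have "(\<Sum>y\<in>UNIV. complex_of_real (gibbs_orbit_kernel G \<phi> \<pi> x y) * v y)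
      = (\<Sum>y\<in>?Q. complex_of_real (\<pi> y / pmass \<pi> ?Q) * v y)"
    by (rule G_apply)
  also have "\<dots> = (\<Sum>y\<in>?Q. complex_of_real (\<pi> y / pmass \<pi> ?Q) * v x)"
    by (rule sum.cong) (simp_all add: const)
  also have "\<dots> = (\<Sum>y\<in>?Q. complex_of_real (\<pi> y / pmass \<pi> ?Q)) * v x"
    by (rule sum_distrib_right[symmetric])
  also have "\<dots> = v x" unfolding e1 e2 by simp
  finally show ?thesis .
qed

lemma key:
  fixes \<pi> :: "'x::finite \<Rightarrow> real"
  assumes act: "group_action G (UNIV :: 'x set) \<phi>"
    and vu: "\<And>b. v b = u (orbit G \<phi> b)"
  shows "(\<Sum>a\<in>UNIV. complex_of_real (gibbs_orbit_kernel G \<phi> \<pi> x a) *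
            (\<Sum>b\<in>UNIV. complex_of_real (P a b) * v b))
     = (\<Sum>Q'\<in>orbits G UNIV \<phi>. complex_of_real (projection_chain \<pi> P (orbit G \<phi> x) Q') * u Q')"
proof -
  let ?Q = "orbit G \<phi> x"
  let ?c = "\<lambda>a. complex_of_real (\<pi> a / pmass \<pi> ?Q)"
  have "(\<Sum>Q'\<in>orbits G UNIV \<phi>. complex_of_real (projection_chain \<pi> P ?Q Q') * u Q')
     = (\<Sum>Q'\<in>orbits G UNIV \<phi>. \<Sum>a\<in>?Q. \<Sum>b\<in>Q'. ?c a * (complex_of_real (P a b) * v b))"
  proof (intro sum.cong refl)
    fix Q' assume "Q' \<in> orbits G UNIV \<phi>"
    then obtain z where z: "Q' = orbit G \<phi> z" unfolding orbits_eq by auto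
    have vb: "b \<in> Q' \<Longrightarrow> v b = u Q'" for b
      using vu orb_eq[OF act] z by metis
    have "complex_of_real (projection_chain \<pi> P ?Q Q') * u Q'
       = (\<Sum>a\<in>?Q. \<Sum>b\<in>Q'. ?c a * (complex_of_real (P a b) * u Q'))"
      unfolding projection_chain_def of_real_divide of_real_sum sum_divide_distrib sum_distrib_right
      by (intro sum.cong refl) (simp add: field_simps)
    also have "\<dots> = (\<Sum>a\<in>?Q. \<Sum>b\<in>Q'. ?c a * (complex_of_real (P a b) * v b))"
      using vb by simp
    finally show "complex_of_real (projection_chain \<pi> P ?Q Q') * u Q'
       = (\<Sum>a\<in>?Q. \<Sum>b\<in>Q'. ?c a * (complex_of_real (P a b) * v b))" .
  qed
  also have "\<dots> = (\<Sum>a\<in>?Q. ?c a * (\<Sum>Q'\<in>orbits G UNIV \<phi>. \<Sum>b\<in>Q'. complex_of_real (P a b) * v b))"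
    by (subst sum.swap) (simp add: sum_distrib_left)
  also have "\<dots> = (\<Sum>a\<in>?Q. ?c a * (\<Sum>b\<in>UNIV. complex_of_real (P a b) * v b))"
    using orb_sum[OF act] by simp
  also have "\<dots> = (\<Sum>a\<in>UNIV. complex_of_real (gibbs_orbit_kernel G \<phi> \<pi> x a) *
            (\<Sum>b\<in>UNIV. complex_of_real (P a b) * v b))"
    by (rule G_apply[symmetric])
  finally show ?thesis by (rule sym)
qed

lemma zero_vec:
  fixes \<pi> :: "'x \<Rightarrow> real"
  assumes ab: "a \<noteq> b" and fin: "finite S" and iff: "a \<in> S \<longleftrightarrow> b \<in> S"
  shows "(\<Sum>y\<in>S. complex_of_real (\<pi> y / c) * ((if y = a then complex_of_real (\<pi> b) else 0)
           + (if y = b then - complex_of_real (\<pi> a) else 0))) = 0"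
proof (cases "a \<in> S")
  case True
  have "(\<Sum>y\<in>S. complex_of_real (\<pi> y / c) * ((if y = a then complex_of_real (\<pi> b) else 0)
           + (if y = b then - complex_of_real (\<pi> a) else 0)))
      = (\<Sum>y\<in>{a,b}. complex_of_real (\<pi> y / c) * ((if y = a then complex_of_real (\<pi> b) else 0)
           + (if y = b then - complex_of_real (\<pi> a) else 0)))"
    by (rule sum.mono_neutral_right) (use True iff fin in auto)
  also have "\<dots> = 0" using ab by (simp add: field_simps)
  finally show ?thesis .
next
  case False
  then show ?thesis using iff by (intro sum.neutral) auto
qed

theorem proposition6p2:
  fixes \<pi> :: "'x::finite \<Rightarrow> real"
    and P :: "'x \<Rightarrow> 'x \<Rightarrow> real"
    and G :: "('g, 'm) monoid_scheme"
    and \<phi> :: "'g \<Rightarrow> 'x \<Rightarrow> 'x"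
  assumes pi_pos: "\<And>x. \<pi> x > 0"
    and pi_sum: "(\<Sum>x\<in>UNIV. \<pi> x) = 1"
    and P_nonneg: "\<And>x y. P x y \<ge> 0"
    and P_stoch: "\<And>x. (\<Sum>y\<in>UNIV. P x y) = 1"
    and P_rev: "\<And>x y. \<pi> x * P x y = \<pi> y * P y x"
    and act: "group_action G (UNIV :: 'x set) \<phi>"
    and k_lt_n: "card (orbits G (UNIV :: 'x set) \<phi>) < CARD('x)"
  shows "spec_on UNIV (mat_mult (mat_mult (gibbs_orbit_kernel G \<phi> \<pi>) P) (gibbs_orbit_kernel G \<phi> \<pi>))
         = spec_on (orbits G UNIV \<phi>) (projection_chain \<pi> P) \<union> {0}"
proof -
  define Gk where "Gk = gibbs_orbit_kernel G \<phi> \<pi>"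
  define orb where "orb = orbit G \<phi>"
  define Gop where "Gop = (\<lambda>(v::'x \<Rightarrow> complex) x. \<Sum>y\<in>UNIV. complex_of_real (Gk x y) * v y)"
  define Pop where "Pop = (\<lambda>(v::'x \<Rightarrow> complex) x. \<Sum>y\<in>UNIV. complex_of_real (P x y) * v y)"
  have Kapp: "(\<Sum>z\<in>UNIV. complex_of_real (mat_mult (mat_mult Gk P) Gk x z) * v z) = Gop (Pop (Gop v)) x" for v x
    unfolding Gop_def Pop_def mat_mult_apply ..
  have Gorb: "Gop w y = Gop w x" if "y \<in> orb x" for w x y
  proof -
    have "orb y = orb x" using orb_eq[OF act] that unfolding orb_def by blast
    then have "Gk y = Gk x" unfolding Gk_def gibbs_orbit_kernel_def orb_def by (intro ext) simp
    then show ?thesis unfolding Gop_def by simp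
  qed
  have Gfix: "Gop v x = v x" if "\<And>x y. y \<in> orb x \<Longrightarrow> v y = v x" for v x
    unfolding Gop_def Gk_def by (rule G_fix[OF act pi_pos]) (use that in \<open>simp add: orb_def\<close>)
  have keyG: "Gop (Pop v) x = (\<Sum>Q'\<in>orbits G UNIV \<phi>. complex_of_real (projection_chain \<pi> P (orb x) Q') * u Q')"
    if "\<And>b. v b = u (orb b)" for v u x
    unfolding Gop_def Pop_def Gk_def orb_def by (rule key[OF act]) (use that in \<open>simp add: orb_def\<close>)
  have orbs: "orbits G UNIV \<phi> = range orb" unfolding orbits_eq orb_def ..
  have orefl: "x \<in> orb x" for x using orb_refl[OF act] unfolding orb_def .
  show ?thesis
    unfolding Gk_def[symmetric]
  proof (intro equalityI subsetI)
    fix c assume "c \<in> spec_on UNIV (mat_mult (mat_mult Gk P) Gk)"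
    then obtain v x0 where vx0: "v x0 \<noteq> 0" and eig: "\<And>x. Gop (Pop (Gop v)) x = c * v x"
      unfolding spec_on_def Kapp by auto
    show "c \<in> spec_on (orbits G UNIV \<phi>) (projection_chain \<pi> P) \<union> {0}"
    proof (cases "c = 0")
      case True then show ?thesis by simp
    next
      case False
      have const: "v y = v x" if "y \<in> orb x" for x y
      proof -
        have "c * v y = c * v x" using eig Gorb[OF that] by metis
        then show ?thesis using False by simp
      qed
      define u where "u = (\<lambda>Q. v (SOME b. b \<in> Q))"
      have vu: "v b = u (orb b)" for b
      proof -
        have "(SOME b'. b' \<in> orb b) \<in> orb b" using orefl by (rule someI)
        then show ?thesis unfolding u_def using const by metis
      qed
      have Gv: "Gop v = v" using Gfix const by blast
      have "c \<in> spec_on (orbits G UNIV \<phi>) (projection_chain \<pi> P)"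
        unfolding spec_on_def
      proof (intro CollectI exI conjI)
        show "\<exists>Q\<in>orbits G UNIV \<phi>. u Q \<noteq> 0"
          using vx0 vu orbs by (metis rangeI)
        show "\<forall>Q\<in>orbits G UNIV \<phi>. (\<Sum>Q'\<in>orbits G UNIV \<phi>. complex_of_real (projection_chain \<pi> P Q Q') * u Q') = c * u Q"
        proof
          fix Q assume "Q \<in> orbits G UNIV \<phi>"
          then obtain x where x: "Q = orb x" using orbs by auto
          show "(\<Sum>Q'\<in>orbits G UNIV \<phi>. complex_of_real (projection_chain \<pi> P Q Q') * u Q') = c * u Q"
            using keyG[of v u x, OF vu] eig[of x] Gv vu[of x] x by simp
        qed
      qed
      then show ?thesis by simp
    qed
  next
    fix c assume "c \<in> spec_on (orbits G UNIV \<phi>) (projection_chain \<pi> P) \<union> {0}"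
    then consider "c \<in> spec_on (orbits G UNIV \<phi>) (projection_chain \<pi> P)" | "c = 0" by blast
    then show "c \<in> spec_on UNIV (mat_mult (mat_mult Gk P) Gk)"
    proof cases
      case 1
      then obtain u Q0 where Q0: "Q0 \<in> orbits G UNIV \<phi>" "u Q0 \<noteq> 0"
        and eu: "\<And>Q. Q \<in> orbits G UNIV \<phi> \<Longrightarrow>
           (\<Sum>Q'\<in>orbits G UNIV \<phi>. complex_of_real (projection_chain \<pi> P Q Q') * u Q') = c * u Q"
        unfolding spec_on_def by blast
      define v where "v = (\<lambda>b. u (orb b))"
      have vu: "v b = u (orb b)" for b unfolding v_def ..
      have const: "v y = v x" if "y \<in> orb x" for x y
        unfolding v_def using orb_eq[OF act] that unfolding orb_def by metis
      have Gv: "Gop v = v" using Gfix const by blast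
      obtain x0 where x0: "Q0 = orb x0" using Q0 orbs by auto
      show ?thesis unfolding spec_on_def Kapp
      proof (intro CollectI exI conjI ballI)
        show "\<exists>x\<in>UNIV. v x \<noteq> 0" using Q0 x0 vu by auto
        fix x
        show "Gop (Pop (Gop v)) x = c * v x"
          unfolding Gv using keyG[of v u x, OF vu] eu[of "orb x"] orbs vu by simp
      qed
    next
      case 2
      have "\<not> inj orb"
      proof
        assume "inj orb"
        then have "card (range orb) = CARD('x)" by (simp add: card_image)
        then show False using k_lt_n orbs by simp
      qed
      then obtain a b where ab: "a \<noteq> b" "orb a = orb b" unfolding inj_def by blast
      then have bin: "b \<in> orb a" using orefl by simp
      define v :: "'x \<Rightarrow> complex" where
        "v = (\<lambda>y. (if y = a then complex_of_real (\<pi> b) else 0) + (if y = b then - complex_of_real (\<pi> a) else 0))"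
      have Gv0: "Gop v x = 0" for x
      proof -
        have iff: "a \<in> orb x \<longleftrightarrow> b \<in> orb x"
        proof
          assume "a \<in> orb x"
          then have "orb a = orb x" using orb_eq[OF act] unfolding orb_def by blast
          then show "b \<in> orb x" using bin by simp
        next
          assume "b \<in> orb x"
          then have "orb b = orb x" using orb_eq[OF act] unfolding orb_def by blast
          then show "a \<in> orb x" using ab orefl by metis
        qed
        have "Gop v x = (\<Sum>y\<in>orb x. complex_of_real (\<pi> y / pmass \<pi> (orb x)) * v y)"
          unfolding Gop_def Gk_def G_apply orb_def ..
        also have "\<dots> = 0"
          unfolding v_def by (rule zero_vec) (use iff ab(1) in auto)
        finally show ?thesis .
      qed
      have "Gop (Pop (Gop v)) x = 0" for x
      proof -
        have "Gop v = (\<lambda>_. 0)" using Gv0 by auto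
        then have "Gop (Pop (Gop v)) x = Gop (Pop (\<lambda>_. 0)) x" by simp
        also have "\<dots> = 0" unfolding Gop_def Pop_def by simp
        finally show ?thesis .
      qed
      moreover have "v a \<noteq> 0" unfolding v_def using ab pi_pos[of b] by simp
      ultimately show ?thesis unfolding spec_on_def Kapp 2 by auto
    qed
  qed
qed

end
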